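(* Let $d\ge 2$ and let $(c_\lambda)_{\lambda\vdash 2d}$ be real numbers; write $f^{(n)}=\sum_{\lambda\vdash 2d}c_\lambda p^{(n)}_\lambda$. Then $f^{(n)}$ is nonnegative on $\mathbb{R}^n$ for every $n\ge 2d$ if and only if the $2d$-variate polynomial $\Phi_f(s,t)=\sum_{\lambda\vdash 2d}c_\lambda\Phi_\lambda(s,t)$ is nonnegative on $\Delta\times\mathbb{R}^d$.
   Context: $p_i^{(n)}=\frac1n(x_1^i+\dots+x_n^i)$ and $p^{(n)}_\lambda=\prod_{i=1}^l p^{(n)}_{\lambda_i}$ for a partition $\lambda=(\lambda_1,\dots,\lambda_l)$ of $2d$. For such $\lambda$, $\Phi_\lambda(s_1,\dots,s_d,t_1,\dots,t_d)=\prod_{i=1}^l\left(s_1t_1^{\lambda_i}+\dots+s_dt_d^{\lambda_i}\right)$. $\Delta=\{\alpha\in[0,1]^d:\alpha_1+\dots+\alpha_d=1\}$ is the standard simplex. *)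

theory Defs
  imports Complex_Main
begin

definition partitions :: "nat \<Rightarrow> nat list set" where
  "partitions m = {lam. sorted_wrt (\<ge>) lam \<and> (\<forall>k\<in>set lam. 0 < k) \<and> sum_list lam = m}"

definition psum :: "nat \<Rightarrow> nat \<Rightarrow> (nat \<Rightarrow> real) \<Rightarrow> real" where
  "psum n i x = (1 / real n) * (\<Sum>j<n. x j ^ i)"

definition psum_part :: "nat \<Rightarrow> nat list \<Rightarrow> (nat \<Rightarrow> real) \<Rightarrow> real" where
  "psum_part n lam x = prod_list (map (\<lambda>i. psum n i x) lam)"

definition Phi :: "nat \<Rightarrow> nat list \<Rightarrow> (nat \<Rightarrow> real) \<Rightarrow> (nat \<Rightarrow> real) \<Rightarrow> real" where
  "Phi d lam s t = prod_list (map (\<lambda>k. \<Sum>j<d. s j * t j ^ k) lam)"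

definition simplex :: "nat \<Rightarrow> (nat \<Rightarrow> real) \<Rightarrow> bool" where
  "simplex d s \<longleftrightarrow> (\<forall>j<d. 0 \<le> s j \<and> s j \<le> 1) \<and> (\<Sum>j<d. s j) = 1"

end

theory Submission
  imports Defs "HOL-Computational_Algebra.Polynomial"
begin


definition Lf :: "nat \<Rightarrow> (nat \<Rightarrow> real) \<Rightarrow> real poly \<Rightarrow> real" where
  "Lf n x p = (\<Sum>i<n. poly p (x i))"

lemma Lf_add: "Lf n x (p + q) = Lf n x p + Lf n x q"
  by (simp add: Lf_def sum.distrib)
lemma Lf_diff: "Lf n x (p - q) = Lf n x p - Lf n x q"
  by (simp add: Lf_def sum_subtractf)
lemma Lf_smult: "Lf n x (smult c p) = c * Lf n x p"
  by (simp add: Lf_def sum_distrib_left)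
lemma Lf_0[simp]: "Lf n x 0 = 0"
  by (simp add: Lf_def)

fun OP :: "nat \<Rightarrow> (nat \<Rightarrow> real) \<Rightarrow> nat \<Rightarrow> real poly" where
  "OP n x 0 = 1"
| "OP n x (Suc 0) = [:- (Lf n x [:0,1:] / Lf n x 1), 1:]"
| "OP n x (Suc (Suc k)) =
     [:- (Lf n x ([:0,1:] * OP n x (Suc k) * OP n x (Suc k)) / Lf n x (OP n x (Suc k) * OP n x (Suc k))), 1:] * OP n x (Suc k)
     - smult (Lf n x (OP n x (Suc k) * OP n x (Suc k)) / Lf n x (OP n x k * OP n x k)) (OP n x k)"

lemma OP_monic: "degree (OP n x k) = k \<and> lead_coeff (OP n x k) = 1"
proof (induction n x k rule: OP.induct)
  case (1 n x)
  then show ?case by simp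
next
  case (2 n x)
  then show ?case by simp
next
  case (3 n x k)
  define P where "P = OP n x (Suc k)"
  define Q where "Q = OP n x k"
  define a where "a = Lf n x ([:0,1:] * P * P) / Lf n x (P * P)"
  define b where "b = Lf n x (P * P) / Lf n x (Q * Q)"
  have P: "degree P = Suc k" "lead_coeff P = 1" using 3 by (auto simp: P_def)
  have Q: "degree Q = k" using 3 by (auto simp: Q_def)
  have P0: "P \<noteq> 0" using P by auto
  have dA: "degree ([:-a,1:] * P) = Suc (Suc k)"
    using P0 P by (subst degree_mult_eq) auto
  have lA: "lead_coeff ([:-a,1:] * P) = 1" unfolding lead_coeff_mult using P by simp
  have dB: "degree (smult b Q) < Suc (Suc k)" using Q by simp
  have eq: "OP n x (Suc (Suc k)) = [:-a,1:] * P - smult b Q"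
    by (simp add: P_def Q_def a_def b_def)
  have cB: "coeff (smult b Q) (Suc (Suc k)) = 0"
    using Q by (simp add: coeff_eq_0)
  have "degree ([:-a,1:] * P - smult b Q) = Suc (Suc k)"
    using dA dB by (metis degree_add_eq_left diff_conv_add_uminus degree_minus)
  moreover have "lead_coeff ([:-a,1:] * P - smult b Q) = 1"
    using calculation lA dA cB by simp
  ultimately show ?case unfolding eq by blast
qed


lemma Lf_cmult: "Lf n x ([:c:] * p) = c * Lf n x p"
  by (simp add: Lf_def sum_distrib_left)

lemma decomp:
  fixes P q :: "real poly"
  assumes "degree P = m" "lead_coeff P = 1" "degree q \<le> m"
  shows "q - [:coeff q m:] * P = 0 \<or> degree (q - [:coeff q m:] * P) < m"
proof -
  define r where "r = q - [:coeff q m:] * P"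
  have c: "coeff r m = 0" using assms by (simp add: r_def)
  have d: "degree r \<le> m" unfolding r_def using assms
    by (intro degree_diff_le) (auto intro: order.trans[OF degree_mult_le])
  show ?thesis
  proof (cases "r = 0")
    case False
    then have "degree r \<noteq> m" using c by auto
    then show ?thesis using d r_def by auto
  qed (simp add: r_def)
qed

definition orth :: "nat \<Rightarrow> (nat \<Rightarrow> real) \<Rightarrow> real poly \<Rightarrow> nat \<Rightarrow> bool" where
  "orth n x P m \<longleftrightarrow> (\<forall>q. q = 0 \<or> degree q < m \<longrightarrow> Lf n x (P * q) = 0)"

lemma orth_top:
  assumes "orth n x P m" "degree P = m" "lead_coeff P = 1" "degree q \<le> m"
  shows "Lf n x (P * q) = coeff q m * Lf n x (P * P)"
proof -
  define r where "r = q - [:coeff q m:] * P"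
  have "r = 0 \<or> degree r < m" using decomp[OF assms(2-4)] by (simp add: r_def)
  then have "Lf n x (P * r) = 0" using assms(1) unfolding orth_def by auto
  moreover have "P * q = [:coeff q m:] * (P * P) + P * r" by (simp add: r_def algebra_simps)
  ultimately show ?thesis by (simp add: Lf_add Lf_cmult Lf_smult)
qed

lemma le_Suc_iff_poly: "(q = 0 \<or> degree q < Suc k) \<longleftrightarrow> degree q \<le> k"
  by auto

lemma OP_orth:
  assumes "\<And>j. j < k \<Longrightarrow> Lf n x (OP n x j * OP n x j) > 0"
  shows "orth n x (OP n x k) k"
  using assms
proof (induction n x k rule: OP.induct)
  case (1 n x)
  then show ?case by (simp add: orth_def)
next
  case (2 n x)
  have pos: "Lf n x 1 > 0" using 2[of 0] by simp
  show ?case unfolding orth_def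
  proof (intro allI impI)
    fix q :: "real poly" assume "q = 0 \<or> degree q < Suc 0"
    then have "degree q = 0" by auto
    then obtain c where q: "q = [:c:]" by (metis degree_eq_zeroE)
    have e: "[:- (Lf n x [:0,1:] / Lf n x 1), 1:] * q = [:c:] * [:0,1:] - [:c * (Lf n x [:0,1:] / Lf n x 1):] * 1"
      by (simp add: q)
    show "Lf n x (OP n x (Suc 0) * q) = 0"
      using pos by (simp only: OP.simps e Lf_diff Lf_cmult) simp
  qed
next
  case (3 n x k)
  define P where "P = OP n x (Suc k)"
  define Q where "Q = OP n x k"
  define X where "X = [:0,1::real:]"
  define a where "a = Lf n x (X * P * P) / Lf n x (P * P)"
  define b where "b = Lf n x (P * P) / Lf n x (Q * Q)"
  have posP: "Lf n x (P * P) > 0" using "3.prems"[of "Suc k"] by (simp add: P_def)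
  have posQ: "Lf n x (Q * Q) > 0" using "3.prems"[of k] by (simp add: Q_def)
  have oP: "orth n x P (Suc k)" using 3 by (simp add: P_def)
  have oQ: "orth n x Q k" using 3 by (simp add: Q_def)
  have mP: "degree P = Suc k" "lead_coeff P = 1" unfolding P_def using OP_monic[of n x "Suc k"] by auto
  have mQ: "degree Q = k" "lead_coeff Q = 1" unfolding Q_def using OP_monic[of n x k] by auto
  have eq: "OP n x (Suc (Suc k)) = X * P - [:a:] * P - [:b:] * Q"
    by (simp add: P_def Q_def a_def b_def X_def algebra_simps)
  have PQ: "Lf n x (P * Q) = 0" using oP mQ by (simp add: orth_def)
  show ?case unfolding orth_def le_Suc_iff_poly
  proof (intro allI impI)
    fix q :: "real poly" assume dq: "degree q \<le> Suc k"
    define r where "r = q - [:coeff q (Suc k):] * P"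
    have "r = 0 \<or> degree r < Suc k" using decomp[OF mP dq] by (simp add: r_def)
    then have dr: "degree r \<le> k" by auto
    have dXr: "degree (X * r) \<le> Suc k" using dr
      by (auto simp: X_def intro!: order.trans[OF degree_mult_le])
    have cXr: "coeff (X * r) (Suc k) = coeff r k" by (simp add: X_def)
    have Pr: "Lf n x (P * r) = 0" using oP dr by (simp add: orth_def)
    have PXr: "Lf n x (P * (X * r)) = coeff r k * Lf n x (P * P)"
      using orth_top[OF oP mP dXr] cXr by simp
    have Qr: "Lf n x (Q * r) = coeff r k * Lf n x (Q * Q)"
      using orth_top[OF oQ mQ dr] .
    have NP: "Lf n x ((X * P - [:a:] * P - [:b:] * Q) * P) = 0"
    proof -
      have "(X * P - [:a:] * P - [:b:] * Q) * P = X * P * P - [:a:] * (P * P) - [:b:] * (P * Q)"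
        by (simp add: algebra_simps)
      then show ?thesis using posP PQ by (simp add: Lf_diff Lf_cmult Lf_smult a_def)
    qed
    have Nr: "Lf n x ((X * P - [:a:] * P - [:b:] * Q) * r) = 0"
    proof -
      have "(X * P - [:a:] * P - [:b:] * Q) * r = P * (X * r) - [:a:] * (P * r) - [:b:] * (Q * r)"
        by (simp add: algebra_simps)
      then show ?thesis using posQ Pr PXr Qr by (simp add: Lf_diff Lf_cmult Lf_smult b_def)
    qed
    define N where "N = X * P - [:a:] * P - [:b:] * Q"
    define c where "c = coeff q (Suc k)"
    have qe: "q = [:c:] * P + r" by (simp add: r_def c_def)
    have "N * q = [:c:] * (N * P) + N * r" by (subst qe) (simp add: algebra_simps)
    then have "OP n x (Suc (Suc k)) * q
       = [:c:] * ((X * P - [:a:] * P - [:b:] * Q) * P) + (X * P - [:a:] * P - [:b:] * Q) * r"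
      by (simp only: eq N_def)
    then show "Lf n x (OP n x (Suc (Suc k)) * q) = 0"
      using NP Nr by (simp add: Lf_add Lf_cmult Lf_smult)
  qed
qed




lemma Lf_sq_pos:
  assumes "p \<noteq> 0" "degree p < card (x ` {..<n})"
  shows "Lf n x (p * p) > 0"
proof -
  have nn: "\<And>i. i \<in> {..<n} \<Longrightarrow> 0 \<le> poly (p * p) (x i)" by simp
  have "Lf n x (p * p) \<ge> 0" unfolding Lf_def by (rule sum_nonneg) (rule nn)
  moreover have "Lf n x (p * p) \<noteq> 0"
  proof
    assume "Lf n x (p * p) = 0"
    then have "(\<Sum>i\<in>{..<n}. poly (p * p) (x i)) = 0" unfolding Lf_def by simp
    then have "\<forall>i\<in>{..<n}. poly (p * p) (x i) = 0"
      using sum_nonneg_eq_0_iff[of "{..<n}" "\<lambda>i. poly (p*p) (x i)"] nn by blast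
    then have "x ` {..<n} \<subseteq> {y. poly p y = 0}" by auto
    then have "card (x ` {..<n}) \<le> card {y. poly p y = 0}"
      by (rule card_mono[OF poly_roots_finite[OF assms(1)]])
    also have "\<dots> \<le> degree p" using card_poly_roots_bound[OF assms(1)] .
    finally show False using assms(2) by simp
  qed
  ultimately show ?thesis by simp
qed

lemma const_sign_noroot:
  fixes p :: "real poly"
  assumes "\<And>y. poly p y \<noteq> 0"
  shows "(\<forall>y. poly p y \<ge> 0) \<or> (\<forall>y. poly p y \<le> 0)"
proof (rule ccontr)
  assume "\<not> ?thesis"
  then obtain y1 y2 where y1: "poly p y1 < 0" and y2: "poly p y2 > 0" by (meson not_le)
  have "y1 < y2 \<or> y2 < y1" using y1 y2 by (cases y1 y2 rule: linorder_cases) auto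
  then show False
  proof
    assume "y1 < y2" then show False using poly_IVT_pos[OF _ y1 y2] assms by blast
  next
    assume "y2 < y1" then show False using poly_IVT_neg[OF _ y2 y1] assms by blast
  qed
qed

lemma sign_fix:
  fixes p :: "real poly"
  assumes "p \<noteq> 0"
  shows "\<exists>A. finite A \<and> A \<subseteq> {y. poly p y = 0} \<and>
     ((\<forall>y. poly (p * (\<Prod>a\<in>A. [:-a,1:])) y \<ge> 0) \<or> (\<forall>y. poly (p * (\<Prod>a\<in>A. [:-a,1:])) y \<le> 0))"
  using assms
proof (induction "degree p" arbitrary: p rule: less_induct)
  case (less p)
  show ?case
  proof (cases "\<exists>y. poly p y = 0")
    case False
    then show ?thesis using const_sign_noroot[of p] by (intro exI[of _ "{}"]) auto
  next
    case True
    then obtain a where a: "poly p a = 0" by blast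
    then have "[:-a, 1:] dvd p" by (subst (asm) poly_eq_0_iff_dvd)
    then obtain p1 where p1: "p = [:-a, 1:] * p1" by (auto simp: dvd_def)
    with \<open>p \<noteq> 0\<close> have p10: "p1 \<noteq> 0" by auto
    have deg: "degree p = Suc (degree p1)"
      by (subst p1, subst degree_mult_eq) (use p10 in auto)
    obtain A1 where A1: "finite A1" "A1 \<subseteq> {y. poly p1 y = 0}"
      "(\<forall>y. poly (p1 * (\<Prod>a\<in>A1. [:-a,1:])) y \<ge> 0) \<or> (\<forall>y. poly (p1 * (\<Prod>a\<in>A1. [:-a,1:])) y \<le> 0)"
      using less.hyps[of p1] deg p10 by auto
    have sub: "{y. poly p1 y = 0} \<subseteq> {y. poly p y = 0}" by (auto simp: p1)
    show ?thesis
    proof (cases "a \<in> A1")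
      case True
      have r: "(\<Prod>b\<in>A1. [:-b,1:]) = [:-a,1:] * (\<Prod>b\<in>A1-{a}. [:-b,1:])"
        by (rule prod.remove[OF A1(1) True])
      have eq: "p * (\<Prod>b\<in>A1-{a}. [:-b,1:]) = p1 * (\<Prod>b\<in>A1. [:-b,1:])"
        by (simp only: p1 r mult_ac)
      show ?thesis
      proof (rule exI[of _ "A1-{a}"], intro conjI)
        show "finite (A1 - {a})" using A1(1) by blast
        show "A1 - {a} \<subseteq> {y. poly p y = 0}" using A1(2) sub by blast
        show "(\<forall>y. poly (p * (\<Prod>b\<in>A1-{a}. [:-b,1:])) y \<ge> 0) \<or> (\<forall>y. poly (p * (\<Prod>b\<in>A1-{a}. [:-b,1:])) y \<le> 0)"
          unfolding eq by (rule A1(3))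
      qed
    next
      case False
      have e: "\<And>y. poly (p * (\<Prod>b\<in>insert a A1. [:-b,1:])) y
          = (y - a)^2 * poly (p1 * (\<Prod>b\<in>A1. [:-b,1:])) y"
      proof -
        fix y
        have "poly (p * (\<Prod>b\<in>insert a A1. [:-b,1:])) y
           = ((y - a) * poly p1 y) * ((y - a) * (\<Prod>b\<in>A1. poly [:-b,1:] y))"
          unfolding p1 poly_mult poly_prod prod.insert[OF A1(1) False] by simp
        also have "\<dots> = (y - a)^2 * poly (p1 * (\<Prod>b\<in>A1. [:-b,1:])) y"
          unfolding poly_mult poly_prod by (simp add: power2_eq_square)
        finally show "?thesis y" .
      qed
      have sg: "(\<forall>y. poly (p * (\<Prod>b\<in>insert a A1. [:-b,1:])) y \<ge> 0) \<or>
            (\<forall>y. poly (p * (\<Prod>b\<in>insert a A1. [:-b,1:])) y \<le> 0)"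
        using A1(3) unfolding e by (meson mult_nonneg_nonneg mult_nonneg_nonpos zero_le_power2)
      show ?thesis
      proof (rule exI[of _ "insert a A1"], intro conjI)
        show "finite (insert a A1)" using A1(1) by blast
        show "insert a A1 \<subseteq> {y. poly p y = 0}" using A1(2) sub a by blast
      qed (rule sg)
    qed
  qed
qed



lemma OP_d_orth:
  assumes "d \<le> card (x ` {..<n})"
  shows "orth n x (OP n x d) d"
proof (rule OP_orth)
  fix j assume "j < d"
  have m: "degree (OP n x j) = j" "lead_coeff (OP n x j) = 1" using OP_monic[of n x j] by auto
  then have "OP n x j \<noteq> 0" by auto
  then show "Lf n x (OP n x j * OP n x j) > 0"
    using Lf_sq_pos[of "OP n x j" x n] m \<open>j < d\<close> assms by simp
qed

lemma OP_roots:
  assumes "d \<le> card (x ` {..<n})" "d \<ge> 1"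
  shows "card {y. poly (OP n x d) y = 0} = d"
proof -
  define P where "P = OP n x d"
  have m: "degree P = d" "lead_coeff P = 1" using OP_monic[of n x d] by (auto simp: P_def)
  then have P0: "P \<noteq> 0" by auto
  have o: "orth n x P d" using OP_d_orth[OF assms(1)] by (simp add: P_def)
  define Z where "Z = {y. poly P y = 0}"
  have fZ: "finite Z" using poly_roots_finite[OF P0] by (simp add: Z_def)
  have le: "card Z \<le> d" using card_poly_roots_bound[OF P0] m by (simp add: Z_def)
  have "\<not> card Z < d"
  proof
    assume lt: "card Z < d"
    obtain A where A: "finite A" "A \<subseteq> Z"
      "(\<forall>y. poly (P * (\<Prod>a\<in>A. [:-a,1:])) y \<ge> 0) \<or> (\<forall>y. poly (P * (\<Prod>a\<in>A. [:-a,1:])) y \<le> 0)"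
      using sign_fix[OF P0] unfolding Z_def by blast
    define Q where "Q = (\<Prod>a\<in>A. [:-a,1:])"
    have "degree Q \<le> sum (degree \<circ> (\<lambda>a. [:-a,1:])) A"
      unfolding Q_def by (rule degree_prod_sum_le[OF A(1)])
    also have "\<dots> = card A" by simp
    also have "\<dots> \<le> card Z" by (rule card_mono[OF fZ A(2)])
    finally have "degree Q < d" using lt by simp
    then have L0: "Lf n x (P * Q) = 0" using o by (simp add: orth_def)
    have allz: "\<forall>i\<in>{..<n}. poly (P * Q) (x i) = 0"
    proof (cases "\<forall>y. poly (P * Q) y \<ge> 0")
      case True
      then show ?thesis
        using sum_nonneg_eq_0_iff[of "{..<n}" "\<lambda>i. poly (P*Q) (x i)"] L0 unfolding Lf_def by blast
    next
      case False
      then have F: "\<forall>y. poly (P * Q) y \<le> 0" using A(3) unfolding Q_def by blast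
      have "(\<Sum>i<n. - poly (P*Q) (x i)) = 0" using L0 unfolding Lf_def by (simp add: sum_negf)
      then show ?thesis
        using sum_nonneg_eq_0_iff[of "{..<n}" "\<lambda>i. - poly (P*Q) (x i)"] F by auto
    qed
    have "x ` {..<n} \<subseteq> Z"
    proof
      fix y assume "y \<in> x ` {..<n}"
      then obtain i where i: "i < n" "y = x i" by auto
      then have "poly P y = 0 \<or> poly Q y = 0" using allz by auto
      moreover have "poly Q y = 0 \<Longrightarrow> y \<in> A"
        unfolding Q_def poly_prod using A(1) by (auto simp: prod_zero_iff)
      ultimately show "y \<in> Z" using A(2) by (auto simp: Z_def)
    qed
    then have "card (x ` {..<n}) \<le> card Z" by (rule card_mono[OF fZ])
    then show False using lt assms(1) by simp
  qed
  then show ?thesis using le by (simp add: Z_def P_def)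
qed

definition lag :: "(nat \<Rightarrow> real) \<Rightarrow> nat \<Rightarrow> nat \<Rightarrow> real poly" where
  "lag t d j = smult (1 / (\<Prod>i\<in>{..<d}-{j}. (t j - t i))) (\<Prod>i\<in>{..<d}-{j}. [:-t i,1:])"

lemma lag_eval:
  assumes "inj_on t {..<d}" "j < d" "m < d"
  shows "poly (lag t d j) (t m) = (if m = j then 1 else 0)"
proof (cases "m = j")
  case True
  have "(\<Prod>i\<in>{..<d}-{j}. (t j - t i)) \<noteq> 0"
    using assms by (auto simp: prod_zero_iff inj_on_def)
  then show ?thesis using True by (simp add: lag_def poly_prod)
next
  case False
  have "(\<Prod>i\<in>{..<d}-{j}. poly [:-t i,1:] (t m)) = 0"
    using assms False by (intro prod_zero) auto
  then show ?thesis using False by (simp add: lag_def poly_prod)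
qed

lemma lag_deg:
  assumes "j < d"
  shows "degree (lag t d j) < d"
proof -
  have "degree (lag t d j) \<le> degree (\<Prod>i\<in>{..<d}-{j}. [:-t i,1:])"
    by (simp add: lag_def)
  also have "\<dots> \<le> sum (degree \<circ> (\<lambda>i. [:-t i,1:])) ({..<d}-{j})"
    by (rule degree_prod_sum_le) simp
  also have "\<dots> = card ({..<d}-{j})" by simp
  also have "\<dots> = d - 1" using assms by simp
  finally show ?thesis using assms by simp
qed

lemma interp:
  assumes "inj_on t {..<d}" "degree r < d"
  shows "r = (\<Sum>j<d. smult (poly r (t j)) (lag t d j))"
proof (rule poly_eqI_degree[of "t ` {..<d}"])
  have cd: "card (t ` {..<d}) = d" using card_image[OF assms(1)] by simp
  fix y assume "y \<in> t ` {..<d}"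
  then obtain m where m: "m < d" "y = t m" by auto
  have "poly (\<Sum>j<d. smult (poly r (t j)) (lag t d j)) y
      = (\<Sum>j<d. poly r (t j) * (if m = j then 1 else 0))"
    unfolding poly_sum using m assms(1) by (simp add: lag_eval)
  also have "\<dots> = (\<Sum>j\<in>{..<d}. if j = m then poly r (t j) else 0)" by (rule sum.cong) auto
  also have "\<dots> = poly r y" using m by simp
  finally show "poly r y = poly (\<Sum>j<d. smult (poly r (t j)) (lag t d j)) y" by simp
next
  have cd: "card (t ` {..<d}) = d" using card_image[OF assms(1)] by simp
  show "degree r < card (t ` {..<d})" using cd assms(2) by simp
  have "degree (\<Sum>j<d. smult (poly r (t j)) (lag t d j)) \<le> d - 1"
    by (rule degree_sum_le) (auto intro: order.trans[OF degree_smult_le] dest: lag_deg[of _ d t])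
  then show "degree (\<Sum>j<d. smult (poly r (t j)) (lag t d j)) < card (t ` {..<d})"
    using cd assms(2) by linarith
qed



lemma Lf_sum: "Lf n x (\<Sum>j\<in>A. f j) = (\<Sum>j\<in>A. Lf n x (f j))"
  unfolding Lf_def poly_sum by (rule sum.swap)

lemma quad:
  assumes o: "orth n x P d" and m: "degree P = d" "lead_coeff P = 1" and d1: "d \<ge> 1"
    and inj: "inj_on t {..<d}" and rt: "\<forall>j<d. poly P (t j) = 0" and dp: "degree p < 2*d"
  shows "Lf n x p = (\<Sum>j<d. Lf n x (lag t d j) * poly p (t j))"
proof -
  have P0: "P \<noteq> 0" using m by auto
  define q where "q = p div P"
  define r where "r = p mod P"
  have pe: "p = q * P + r" by (simp add: q_def r_def)
  have dr: "degree r < d"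
    using degree_mod_less[OF P0, of p] d1 m by (auto simp: r_def)
  have dq: "q = 0 \<or> degree q < d"
  proof (cases "q = 0")
    case False
    have "degree (q * P) = degree q + d" using False P0 m by (simp add: degree_mult_eq)
    moreover have "q * P = p - r" using pe by simp
    moreover have "degree (p - r) < 2 * d"
      using degree_diff_le_max[of p r] dp dr by simp
    ultimately show ?thesis by simp
  qed simp
  have L0: "Lf n x (P * q) = 0" using o dq unfolding orth_def by blast
  have "Lf n x p = Lf n x r" using L0 pe by (simp add: Lf_add mult.commute)
  also have "\<dots> = Lf n x (\<Sum>j<d. smult (poly r (t j)) (lag t d j))"
    using interp[OF inj dr] by simp
  also have "\<dots> = (\<Sum>j<d. Lf n x (lag t d j) * poly r (t j))"
    by (simp add: Lf_sum Lf_smult mult.commute)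
  also have "\<dots> = (\<Sum>j<d. Lf n x (lag t d j) * poly p (t j))"
    using rt by (intro sum.cong) (auto simp: pe)
  finally show ?thesis .
qed

lemma Lf_one: "Lf n x 1 = real n"
  by (simp add: Lf_def)

lemma Lf_monom: "Lf n x (monom 1 k) = (\<Sum>i<n. x i ^ k)"
  by (simp add: Lf_def poly_monom)

lemma Lf_sq_nonneg: "Lf n x (p * p) \<ge> 0"
  unfolding Lf_def by (rule sum_nonneg) simp

lemma gauss_key:
  assumes "d \<le> card (x ` {..<n})" "d \<ge> 1" "n \<ge> 1"
  shows "\<exists>s t. simplex d s \<and> (\<forall>k<2*d. (\<Sum>j<d. s j * t j ^ k) = psum n k x)
     \<and> (\<Sum>j<d. s j * t j ^ (2*d)) \<le> psum n (2*d) x"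
proof -
  define P where "P = OP n x d"
  have m: "degree P = d" "lead_coeff P = 1" using OP_monic[of n x d] by (auto simp: P_def)
  have o: "orth n x P d" using OP_d_orth[OF assms(1)] by (simp add: P_def)
  define Z where "Z = {y. poly P y = 0}"
  have cZ: "card Z = d" using OP_roots[OF assms(1,2)] by (simp add: Z_def P_def)
  have fZ: "finite Z" using cZ assms(2) card_ge_0_finite by force
  define zs where "zs = sorted_list_of_set Z"
  have zs: "distinct zs" "length zs = d" "set zs = Z"
    using cZ fZ by (auto simp: zs_def)
  define t where "t j = zs ! j" for j
  have inj: "inj_on t {..<d}"
    unfolding inj_on_def t_def using zs by (auto simp: nth_eq_iff_index_eq)
  have rt: "\<forall>j<d. poly P (t j) = 0"
    using zs unfolding t_def by (metis Z_def mem_Collect_eq nth_mem)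
  define w where "w j = Lf n x (lag t d j)" for j
  have Q: "\<And>p. degree p < 2*d \<Longrightarrow> Lf n x p = (\<Sum>j<d. w j * poly p (t j))"
    unfolding w_def by (rule quad[OF o m assms(2) inj rt])
  have wpos: "w j \<ge> 0" if j: "j < d" for j
  proof -
    have "degree (lag t d j * lag t d j) \<le> (d - 1) + (d - 1)"
      using lag_deg[OF j, of t] by (intro order.trans[OF degree_mult_le]) auto
    then have "degree (lag t d j * lag t d j) < 2 * d" using assms(2) by linarith
    then have "Lf n x (lag t d j * lag t d j) = (\<Sum>m<d. w m * (poly (lag t d j) (t m))^2)"
      by (simp add: Q power2_eq_square)
    also have "\<dots> = (\<Sum>m<d. if m = j then w m else 0)"
      using lag_eval[OF inj j] by (intro sum.cong) auto
    also have "\<dots> = w j" using j by simp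
    finally show ?thesis using Lf_sq_nonneg[of n x "lag t d j"] by simp
  qed
  have wsum: "(\<Sum>j<d. w j) = real n"
    using Q[of 1] assms(2) by (simp add: Lf_one)
  have wmom: "(\<Sum>j<d. w j * t j ^ k) = (\<Sum>i<n. x i ^ k)" if "k < 2*d" for k
    using Q[of "monom 1 k"] that by (simp add: Lf_monom degree_monom_eq poly_monom)
  have wtop: "(\<Sum>j<d. w j * t j ^ (2*d)) \<le> (\<Sum>i<n. x i ^ (2*d))"
  proof -
    define p where "p = monom 1 (2*d) - P * P"
    have dPP: "degree (P * P) = 2 * d" "lead_coeff (P * P) = 1"
    proof -
      have "P \<noteq> 0" using m by auto
      then show "degree (P * P) = 2 * d" using m by (simp add: degree_mult_eq mult_2)
      show "lead_coeff (P * P) = 1" using m by (simp add: lead_coeff_mult)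
    qed
    have c: "coeff p (2*d) = 0" using dPP by (simp add: p_def)
    have dle: "degree p \<le> 2*d" unfolding p_def using dPP
      by (intro degree_diff_le) (auto intro: order.trans[OF degree_monom_le])
    have dp: "degree p < 2*d"
    proof (cases "p = 0")
      case True then show ?thesis using assms(2) by simp
    next
      case False then have "degree p \<noteq> 2*d" using c by (metis leading_coeff_0_iff)
      then show ?thesis using dle by simp
    qed
    have "Lf n x p = (\<Sum>j<d. w j * t j ^ (2*d))"
      using Q[OF dp] rt by (simp add: p_def poly_monom)
    moreover have "Lf n x p = (\<Sum>i<n. x i ^ (2*d)) - Lf n x (P * P)"
      by (simp add: p_def Lf_diff Lf_monom)
    ultimately show ?thesis using Lf_sq_nonneg[of n x P] by simp
  qed
  define s where "s j = w j / real n" for j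
  have npos: "real n > 0" using assms(3) by simp
  have ssum: "(\<Sum>j<d. s j) = 1"
    using wsum npos by (simp add: s_def sum_divide_distrib[symmetric])
  have spos: "\<forall>j<d. 0 \<le> s j" using wpos npos by (simp add: s_def)
  have sle: "\<forall>j<d. s j \<le> 1"
  proof (intro allI impI)
    fix j assume "j < d"
    then have "s j \<le> (\<Sum>j<d. s j)"
      using spos by (intro member_le_sum) auto
    then show "s j \<le> 1" using ssum by simp
  qed
  have "simplex d s" using spos sle ssum by (simp add: simplex_def)
  moreover have "\<forall>k<2*d. (\<Sum>j<d. s j * t j ^ k) = psum n k x"
  proof (intro allI impI)
    fix k assume "k < 2*d"
    then show "(\<Sum>j<d. s j * t j ^ k) = psum n k x"
      using wmom[of k] npos unfolding psum_def s_def
      by (simp add: sum_divide_distrib[symmetric] field_simps)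
  qed
  moreover have "(\<Sum>j<d. s j * t j ^ (2*d)) \<le> psum n (2*d) x"
  proof -
    have "(\<Sum>j<d. s j * t j ^ (2*d)) = (\<Sum>j<d. w j * t j ^ (2*d)) / real n"
      unfolding s_def by (simp add: sum_divide_distrib[symmetric])
    also have "\<dots> \<le> (\<Sum>i<n. x i ^ (2*d)) / real n"
      using wtop npos by (simp add: divide_right_mono)
    finally show ?thesis by (simp add: psum_def)
  qed
  ultimately show ?thesis by blast
qed



lemma small_key:
  assumes "card (x ` {..<n}) \<le> d" "n \<ge> 1"
  shows "\<exists>s t. simplex d s \<and> (\<forall>k. (\<Sum>j<d. s j * t j ^ k) = psum n k x)"
proof -
  define V where "V = x ` {..<n}"
  define vs where "vs = sorted_list_of_set V"
  define K where "K = length vs"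
  have fV: "finite V" by (simp add: V_def)
  have vs: "distinct vs" "set vs = V" using fV by (auto simp: vs_def)
  have KV: "K = card V" using fV by (simp add: K_def vs_def)
  have Kd: "K \<le> d" using assms(1) KV by (simp add: V_def)
  define cnt where "cnt v = real (card {i\<in>{..<n}. x i = v})" for v
  define t where "t j = (if j < K then vs ! j else 0)" for j
  define s where "s j = (if j < K then cnt (vs ! j) / real n else 0)" for j
  have npos: "real n > 0" using assms(2) by simp
  have mom: "(\<Sum>j<d. s j * t j ^ k) = psum n k x" for k
  proof -
    have "(\<Sum>j<d. s j * t j ^ k) = (\<Sum>j<K. s j * t j ^ k)"
      using Kd by (intro sum.mono_neutral_right) (auto simp: s_def)
    also have "\<dots> = (\<Sum>j<K. cnt (vs ! j) / real n * (vs ! j) ^ k)"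
      by (intro sum.cong) (auto simp: s_def t_def)
    also have "\<dots> = (\<Sum>v\<in>V. cnt v / real n * v ^ k)"
    proof -
      have inj: "inj_on (nth vs) {..<K}"
        using vs(1) by (auto simp: inj_on_def K_def nth_eq_iff_index_eq)
      have im: "nth vs ` {..<K} = V"
        using vs(2) by (auto simp: K_def set_conv_nth)
      show ?thesis
        using sum.reindex[OF inj, of "\<lambda>v. cnt v / real n * v ^ k"] im by simp
    qed
    also have "\<dots> = (\<Sum>v\<in>V. (\<Sum>i\<in>{i\<in>{..<n}. x i = v}. x i ^ k)) / real n"
      by (simp add: sum_divide_distrib cnt_def)
    also have "(\<Sum>v\<in>V. (\<Sum>i\<in>{i\<in>{..<n}. x i = v}. x i ^ k)) = (\<Sum>i<n. x i ^ k)"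
      unfolding V_def by (rule sum.image_gen[symmetric]) simp
    finally show ?thesis by (simp add: psum_def)
  qed
  have ssum: "(\<Sum>j<d. s j) = 1"
    using mom[of 0] npos by (simp add: psum_def)
  have spos: "\<forall>j<d. 0 \<le> s j" by (simp add: s_def cnt_def)
  have sle: "\<forall>j<d. s j \<le> 1"
  proof (intro allI impI)
    fix j assume "j < d"
    then have "s j \<le> (\<Sum>j<d. s j)"
      using spos by (intro member_le_sum) auto
    then show "s j \<le> 1" using ssum by simp
  qed
  have "simplex d s" using spos sle ssum by (simp add: simplex_def)
  then show ?thesis using mom by blast
qed



lemma length_le_sum_list_pos: "(\<forall>k\<in>set xs. 0 < (k::nat)) \<Longrightarrow> length xs \<le> sum_list xs"
  by (induction xs) auto

lemma finite_partitions: "finite (partitions m)"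
proof (rule finite_subset)
  show "partitions m \<subseteq> {xs. set xs \<subseteq> {..m} \<and> length xs \<le> m}"
    unfolding partitions_def
    by (auto dest: length_le_sum_list_pos intro: member_le_sum_list)
  show "finite {xs. set xs \<subseteq> {..m} \<and> length xs \<le> m}"
    by (rule finite_lists_length_le) simp
qed

lemma part_single:
  assumes "lam \<in> partitions m" "m \<in> set lam"
  shows "lam = [m]"
proof -
  obtain xs ys where l: "lam = xs @ m # ys" using split_list[OF assms(2)] by blast
  have "sum_list xs + m + sum_list ys = m" using assms(1) l by (simp add: partitions_def)
  then have "sum_list xs = 0" "sum_list ys = 0" by auto
  moreover have "\<forall>k\<in>set xs. 0 < k" "\<forall>k\<in>set ys. 0 < k" using assms(1) l by (auto simp: partitions_def)
  ultimately have "xs = []" "ys = []" by (metis neq_Nil_conv list.set_intros(1) sum_list_eq_0_iff less_irrefl)+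
  then show ?thesis using l by simp
qed

lemma top_in_partitions: "m > 0 \<Longrightarrow> [m] \<in> partitions m"
  by (simp add: partitions_def)

lemma parts_range:
  assumes "lam \<in> partitions m" "lam \<noteq> [m]" "k \<in> set lam"
  shows "0 < k \<and> k < m"
proof -
  have "0 < k" using assms by (auto simp: partitions_def)
  moreover have "k \<le> m" using assms member_le_sum_list[OF assms(3)] by (auto simp: partitions_def)
  moreover have "k \<noteq> m" using part_single[OF assms(1)] assms(2,3) by auto
  ultimately show ?thesis by simp
qed

lemma sum_split_top:
  fixes g :: "nat list \<Rightarrow> real"
  assumes "m > 0"
  shows "(\<Sum>lam\<in>partitions m. g lam) = g [m] + (\<Sum>lam\<in>partitions m - {[m]}. g lam)"
  using sum.remove[OF finite_partitions top_in_partitions[OF assms]] by simp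

lemma length_ge2:
  assumes "lam \<in> partitions m" "lam \<noteq> [m]" "m > 0"
  shows "length lam \<ge> 2"
proof -
  have "lam \<noteq> []" using assms by (auto simp: partitions_def)
  moreover have "\<not> (\<exists>a. lam = [a])" using assms by (auto simp: partitions_def)
  ultimately show ?thesis by (cases lam; cases "tl lam") auto
qed

lemma sum_two:
  fixes f :: "nat \<Rightarrow> real"
  assumes "d \<ge> 2" "\<And>j. j \<ge> 2 \<Longrightarrow> f j = 0"
  shows "(\<Sum>j<d. f j) = f 0 + f 1"
proof -
  have "(\<Sum>j<d. f j) = (\<Sum>j\<in>{0,1}. f j)"
    using assms by (intro sum.mono_neutral_right) auto
  then show ?thesis by simp
qed

lemma ctop_nonneg:
  fixes c :: "nat list \<Rightarrow> real"
  assumes d2: "d \<ge> 2"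
    and H: "\<forall>s t::nat \<Rightarrow> real. simplex d s \<longrightarrow> (\<Sum>lam\<in>partitions (2*d). c lam * Phi d lam s t) \<ge> 0"
  shows "c [2*d] \<ge> 0"
proof (rule ccontr)
  assume "\<not> c [2*d] \<ge> 0"
  then have C: "c [2*d] < 0" by simp
  define R where "R = partitions (2*d) - {[2*d]}"
  define S where "S = (\<Sum>lam\<in>R. \<bar>c lam\<bar>)"
  have S0: "S \<ge> 0" by (simp add: S_def sum_nonneg)
  define w where "w = min 1 (- c [2*d] / (2 * (S + 1)))"
  have "- c [2*d] / (2 * (S + 1)) > 0" using C S0 by (intro divide_pos_pos) auto
  then have w0: "w > 0" by (simp add: w_def)
  have w1: "w \<le> 1" by (simp add: w_def)
  have wS: "w * S \<le> - c [2*d] / 2"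
  proof -
    have "w * S \<le> (- c [2*d] / (2 * (S + 1))) * S"
      using S0 by (intro mult_right_mono) (auto simp: w_def)
    also have "\<dots> = (- c [2*d] / 2) * (S / (S + 1))" using S0 by (simp add: field_simps)
    also have "\<dots> \<le> (- c [2*d] / 2) * 1"
      using C S0 by (intro mult_left_mono) auto
    finally show ?thesis by simp
  qed
  define s where "s j = (if j = 0 then 1 - w else if j = 1 then w else 0)" for j :: nat
  define t where "t j = (if j = 1 then 1 else 0::real)" for j :: nat
  have simp_s: "simplex d s"
  proof -
    have "(\<Sum>j<d. s j) = s 0 + s 1" by (rule sum_two[OF d2]) (simp add: s_def)
    then show ?thesis using w0 w1 by (auto simp: simplex_def s_def)
  qed
  have inner: "(\<Sum>j<d. s j * t j ^ k) = w" if "k > 0" for k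
  proof -
    have "(\<Sum>j<d. s j * t j ^ k) = s 0 * t 0 ^ k + s 1 * t 1 ^ k"
      by (rule sum_two[OF d2]) (simp add: s_def)
    then show ?thesis using that by (simp add: s_def t_def)
  qed
  have Phi_eq: "Phi d lam s t = w ^ length lam" if "lam \<in> partitions (2*d)" for lam
  proof -
    have "map (\<lambda>k. \<Sum>j<d. s j * t j ^ k) lam = map (\<lambda>k. w) lam"
      using that inner by (intro map_cong) (auto simp: partitions_def)
    then show ?thesis by (simp add: Phi_def prod_list_replicate map_replicate_const)
  qed
  have "0 \<le> (\<Sum>lam\<in>partitions (2*d). c lam * Phi d lam s t)" using H simp_s by blast
  also have "\<dots> = c [2*d] * w + (\<Sum>lam\<in>R. c lam * w ^ length lam)"
    using sum_split_top[of "2*d" "\<lambda>lam. c lam * Phi d lam s t"] d2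
      top_in_partitions[of "2*d"] Phi_eq unfolding R_def by (simp)
  also have "(\<Sum>lam\<in>R. c lam * w ^ length lam) \<le> (\<Sum>lam\<in>R. \<bar>c lam\<bar> * w^2)"
  proof (rule sum_mono)
    fix lam assume l: "lam \<in> R"
    have "length lam \<ge> 2" using length_ge2[of lam "2*d"] l d2 by (auto simp: R_def)
    then have "w ^ length lam \<le> w ^ 2" using w0 w1 by (intro power_decreasing) auto
    then have "c lam * w ^ length lam \<le> \<bar>c lam\<bar> * w ^ length lam"
      using w0 by (intro mult_right_mono) auto
    also have "\<dots> \<le> \<bar>c lam\<bar> * w^2" using \<open>w ^ length lam \<le> w ^ 2\<close> by (intro mult_left_mono) auto
    finally show "c lam * w ^ length lam \<le> \<bar>c lam\<bar> * w^2" .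
  qed
  also have "(\<Sum>lam\<in>R. \<bar>c lam\<bar> * w^2) = w * (w * S)"
    by (simp add: S_def sum_distrib_left power2_eq_square mult_ac)
  finally have "0 \<le> w * (c [2*d] + w * S)" by (simp add: algebra_simps)
  moreover have "c [2*d] + w * S < 0" using wS C by linarith
  then have "w * (c [2*d] + w * S) < 0" by (rule mult_pos_neg[OF w0])
  ultimately show False by linarith
qed



lemma backward:
  fixes c :: "nat list \<Rightarrow> real"
  assumes d2: "d \<ge> 2"
    and H: "\<forall>s t::nat \<Rightarrow> real. simplex d s \<longrightarrow> (\<Sum>lam\<in>partitions (2*d). c lam * Phi d lam s t) \<ge> 0"
    and n: "n \<ge> 2*d"
  shows "(\<Sum>lam\<in>partitions (2*d). c lam * psum_part n lam x) \<ge> 0"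
proof -
  have n1: "n \<ge> 1" using n d2 by simp
  obtain s t where st: "simplex d s" "\<forall>k<2*d. (\<Sum>j<d. s j * t j ^ k) = psum n k x"
     "(\<Sum>j<d. s j * t j ^ (2*d)) \<le> psum n (2*d) x"
  proof (cases "d \<le> card (x ` {..<n})")
    case True
    then show ?thesis using gauss_key[OF True _ n1] d2 that by auto
  next
    case False
    then show ?thesis using small_key[of x n d] n1 that by force
  qed
  define R where "R = partitions (2*d) - {[2*d]}"
  have eqR: "psum_part n lam x = Phi d lam s t" if "lam \<in> R" for lam
  proof -
    have "map (\<lambda>i. psum n i x) lam = map (\<lambda>k. \<Sum>j<d. s j * t j ^ k) lam"
      using that st(2) parts_range[of lam "2*d"] by (intro map_cong) (auto simp: R_def)
    then show ?thesis unfolding psum_part_def Phi_def by (rule arg_cong)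
  qed
  have c0: "c [2*d] \<ge> 0" by (rule ctop_nonneg[OF d2 H])
  have "0 \<le> (\<Sum>lam\<in>partitions (2*d). c lam * Phi d lam s t)" using H st(1) by blast
  also have "\<dots> = c [2*d] * (\<Sum>j<d. s j * t j ^ (2*d)) + (\<Sum>lam\<in>R. c lam * Phi d lam s t)"
    using sum_split_top[of "2*d" "\<lambda>lam. c lam * Phi d lam s t"] d2 unfolding R_def
    by (simp add: Phi_def)
  also have "\<dots> \<le> c [2*d] * psum n (2*d) x + (\<Sum>lam\<in>R. c lam * psum_part n lam x)"
    using eqR st(3) c0 by (simp add: mult_left_mono)
  also have "\<dots> = (\<Sum>lam\<in>partitions (2*d). c lam * psum_part n lam x)"
    using sum_split_top[of "2*d" "\<lambda>lam. c lam * psum_part n lam x"] d2 unfolding R_def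
    by (simp add: psum_part_def)
  finally show ?thesis .
qed



lemma realize:
  fixes m :: nat and a :: "nat \<Rightarrow> nat" and t :: "nat \<Rightarrow> real"
  shows "\<exists>x::nat\<Rightarrow>real. \<forall>k. (\<Sum>i<(\<Sum>j<m. a j). x i ^ k) = (\<Sum>j<m. real (a j) * t j ^ k)"
proof (induction m)
  case 0
  then show ?case by simp
next
  case (Suc m)
  then obtain x where x: "\<forall>k. (\<Sum>i<(\<Sum>j<m. a j). x i ^ k) = (\<Sum>j<m. real (a j) * t j ^ k)" by blast
  define A where "A = (\<Sum>j<m. a j)"
  define y where "y i = (if i < A then x i else t m)" for i
  have "(\<Sum>i<(\<Sum>j<Suc m. a j). y i ^ k) = (\<Sum>j<Suc m. real (a j) * t j ^ k)" for k
  proof -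
    have "(\<Sum>i<(\<Sum>j<Suc m. a j). y i ^ k) = (\<Sum>i\<in>{0..<A + a m}. y i ^ k)"
      by (simp add: A_def atLeast0LessThan)
    also have "\<dots> = (\<Sum>i\<in>{0..<A}. y i ^ k) + (\<Sum>i\<in>{A..<A + a m}. y i ^ k)"
      by (rule sum.atLeastLessThan_concat[symmetric]) auto
    also have "(\<Sum>i\<in>{0..<A}. y i ^ k) = (\<Sum>i<A. x i ^ k)"
      by (simp add: y_def atLeast0LessThan)
    also have "(\<Sum>i\<in>{A..<A + a m}. y i ^ k) = real (a m) * t m ^ k"
      by (simp add: y_def)
    finally show ?thesis using x by (simp add: A_def)
  qed
  then show ?case by blast
qed

lemma tendsto_prod_list_map:
  fixes g :: "'b \<Rightarrow> nat \<Rightarrow> real"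
  assumes "\<forall>k\<in>set lam. ((\<lambda>N. g N k) \<longlongrightarrow> G k) F"
  shows "((\<lambda>N. prod_list (map (g N) lam)) \<longlongrightarrow> prod_list (map G lam)) F"
  using assms
proof (induction lam)
  case Nil
  then show ?case by simp
next
  case (Cons a lam)
  then show ?case by (simp add: tendsto_mult)
qed

lemma sum_split0:
  fixes f :: "nat \<Rightarrow> real"
  assumes "d \<ge> 1"
  shows "(\<Sum>j<d. f j) = f 0 + (\<Sum>j\<in>{1..<d}. f j)"
proof -
  have "{..<d} = insert 0 {1..<d}" using assms by auto
  then show ?thesis by simp
qed

lemma sum_split0_nat:
  fixes f :: "nat \<Rightarrow> nat"
  assumes "d \<ge> 1"
  shows "(\<Sum>j<d. f j) = f 0 + (\<Sum>j\<in>{1..<d}. f j)"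
proof -
  have "{..<d} = insert 0 {1..<d}" using assms by auto
  then show ?thesis by simp
qed

lemma forward:
  fixes c :: "nat list \<Rightarrow> real"
  assumes d2: "d \<ge> 2"
    and H: "\<forall>n\<ge>2*d. \<forall>x::nat \<Rightarrow> real. (\<Sum>lam\<in>partitions (2*d). c lam * psum_part n lam x) \<ge> 0"
    and s: "simplex d s"
  shows "(\<Sum>lam\<in>partitions (2*d). c lam * Phi d lam s t) \<ge> 0"
proof -
  have d1: "d \<ge> 1" using d2 by simp
  have s0: "\<forall>j<d. 0 \<le> s j" and s1: "(\<Sum>j<d. s j) = 1" using s by (auto simp: simplex_def)
  define b where "b N j = nat \<lfloor>real N * s j\<rfloor>" for N j
  define B where "B N = (\<Sum>j\<in>{1..<d}. b N j)" for N
  define a where "a N j = (if j = 0 then N - B N else b N j)" for N j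
  define s' where "s' N j = real (a N j) / real N" for N j
  have bR: "real (b N j) = of_int \<lfloor>real N * s j\<rfloor>" if "j < d" for N j
    using s0 that by (simp add: b_def)
  have BN: "B N \<le> N" for N
  proof -
    have "real (B N) = (\<Sum>j\<in>{1..<d}. of_int \<lfloor>real N * s j\<rfloor>)"
      unfolding B_def of_nat_sum by (intro sum.cong) (auto simp: bR)
    also have "\<dots> \<le> (\<Sum>j\<in>{1..<d}. real N * s j)"
      by (intro sum_mono) simp
    also have "\<dots> = real N * (\<Sum>j\<in>{1..<d}. s j)" by (simp add: sum_distrib_left)
    also have "\<dots> \<le> real N * 1"
    proof -
      have "0 \<le> s 0" using s0 d1 by simp
      then have "(\<Sum>j\<in>{1..<d}. s j) \<le> 1" using s1 sum_split0[OF d1, of s] by simp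
      then show ?thesis by (intro mult_left_mono) auto
    qed
    finally show ?thesis by simp
  qed
  have asum: "(\<Sum>j<d. a N j) = N" for N
    using sum_split0_nat[OF d1, of "a N"] BN[of N] by (simp add: a_def B_def)
  have Gpos: "(\<Sum>lam\<in>partitions (2*d). c lam * Phi d lam (s' N) t) \<ge> 0" if N: "N \<ge> 2*d" for N
  proof -
    obtain x where x: "\<forall>k. (\<Sum>i<(\<Sum>j<d. a N j). x i ^ k) = (\<Sum>j<d. real (a N j) * t j ^ k)"
      using realize by blast
    have ps: "psum N k x = (\<Sum>j<d. s' N j * t j ^ k)" for k
      using x asum[of N] by (simp add: psum_def s'_def sum_divide_distrib[symmetric] sum_distrib_left)
    have eq: "psum_part N lam x = Phi d lam (s' N) t" for lam
      unfolding psum_part_def Phi_def ps ..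
    have "0 \<le> (\<Sum>lam\<in>partitions (2*d). c lam * psum_part N lam x)" using H N by blast
    then show ?thesis by (simp add: eq)
  qed
  have conv1: "(\<lambda>N. s' N j) \<longlonglongrightarrow> s j" if j: "j \<in> {1..<d}" for j
  proof (rule tendsto_sandwich)
    show "\<forall>\<^sub>F N in sequentially. s j - inverse (real N) \<le> s' N j"
    proof (rule eventually_sequentiallyI[of 1])
      fix N :: nat assume "N \<ge> 1"
      then have Np: "real N > 0" by simp
      have "real N * s j < of_int \<lfloor>real N * s j\<rfloor> + 1" by linarith
      then have "(real N * s j - 1) / real N \<le> of_int \<lfloor>real N * s j\<rfloor> / real N"
        using Np by (intro divide_right_mono) auto
      moreover have "(real N * s j - 1) / real N = s j - inverse (real N)"
        using Np by (simp add: field_simps)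
      moreover have "s' N j = of_int \<lfloor>real N * s j\<rfloor> / real N"
        using j bR[of j N] by (simp add: s'_def a_def)
      ultimately show "s j - inverse (real N) \<le> s' N j" by simp
    qed
    show "\<forall>\<^sub>F N in sequentially. s' N j \<le> s j"
    proof (rule eventually_sequentiallyI[of 1])
      fix N :: nat assume "N \<ge> 1"
      then have Np: "real N > 0" by simp
      have "of_int \<lfloor>real N * s j\<rfloor> / real N \<le> (real N * s j) / real N"
        using Np by (intro divide_right_mono) auto
      moreover have "s' N j = of_int \<lfloor>real N * s j\<rfloor> / real N"
        using j bR[of j N] by (simp add: s'_def a_def)
      ultimately show "s' N j \<le> s j" using Np by simp
    qed
    show "(\<lambda>N. s j - inverse (real N)) \<longlonglongrightarrow> s j"
      using tendsto_diff[OF tendsto_const lim_inverse_n, of "s j"] by simp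
    show "(\<lambda>N. s j) \<longlonglongrightarrow> s j" by simp
  qed
  have s'0: "s' N 0 = 1 - (\<Sum>j\<in>{1..<d}. s' N j)" if "N \<ge> 1" for N
  proof -
    have Np: "real N > 0" using that by simp
    have "real (a N 0) = real N - (\<Sum>j\<in>{1..<d}. real (a N j))"
      using BN[of N] by (simp add: a_def B_def of_nat_diff)
    then show ?thesis using Np
      by (simp add: s'_def sum_divide_distrib[symmetric] diff_divide_distrib)
  qed
  have conv0: "(\<lambda>N. s' N 0) \<longlonglongrightarrow> s 0"
  proof -
    have "(\<lambda>N. 1 - (\<Sum>j\<in>{1..<d}. s' N j)) \<longlonglongrightarrow> 1 - (\<Sum>j\<in>{1..<d}. s j)"
      by (intro tendsto_diff tendsto_const tendsto_sum conv1)
    moreover have "1 - (\<Sum>j\<in>{1..<d}. s j) = s 0" using s1 sum_split0[OF d1, of s] by simp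
    moreover have "\<forall>\<^sub>F N in sequentially. 1 - (\<Sum>j\<in>{1..<d}. s' N j) = s' N 0"
      by (rule eventually_sequentiallyI[of 1]) (simp add: s'0)
    ultimately show ?thesis using Lim_transform_eventually by metis
  qed
  have conv: "(\<lambda>N. s' N j) \<longlonglongrightarrow> s j" if "j < d" for j
    using that conv0 conv1 by (cases "j = 0") auto
  have "(\<lambda>N. \<Sum>lam\<in>partitions (2*d). c lam * Phi d lam (s' N) t)
      \<longlonglongrightarrow> (\<Sum>lam\<in>partitions (2*d). c lam * Phi d lam s t)"
    unfolding Phi_def
    by (intro tendsto_sum tendsto_mult tendsto_const tendsto_prod_list_map ballI conv) simp
  then show ?thesis
    using Gpos by (intro LIMSEQ_le_const) (auto intro!: exI[of _ "2*d"])
qed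


theorem theorem3p4:
  fixes d :: nat and c :: "nat list \<Rightarrow> real"
  assumes "d \<ge> 2"
  shows "(\<forall>n\<ge>2*d. \<forall>x::nat \<Rightarrow> real.
            (\<Sum>lam\<in>partitions (2*d). c lam * psum_part n lam x) \<ge> 0)
     \<longleftrightarrow> (\<forall>s t::nat \<Rightarrow> real. simplex d s \<longrightarrow>
            (\<Sum>lam\<in>partitions (2*d). c lam * Phi d lam s t) \<ge> 0)"
proof
  assume H: "\<forall>n\<ge>2*d. \<forall>x::nat \<Rightarrow> real.
            (\<Sum>lam\<in>partitions (2*d). c lam * psum_part n lam x) \<ge> 0"
  show "\<forall>s t::nat \<Rightarrow> real. simplex d s \<longrightarrow>
            (\<Sum>lam\<in>partitions (2*d). c lam * Phi d lam s t) \<ge> 0"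
    using forward[OF assms H] by blast
next
  assume H: "\<forall>s t::nat \<Rightarrow> real. simplex d s \<longrightarrow>
            (\<Sum>lam\<in>partitions (2*d). c lam * Phi d lam s t) \<ge> 0"
  show "\<forall>n\<ge>2*d. \<forall>x::nat \<Rightarrow> real.
            (\<Sum>lam\<in>partitions (2*d). c lam * psum_part n lam x) \<ge> 0"
    using backward[OF assms H] by blast
qed

end
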